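(* Let $\mathcal{G}_1,\dots,\mathcal{G}_m$ be signed digraphs on $\{1,\dots,n\}$ with signed Laplacians $L_1,\dots,L_m$, and assume each $L_k$ is weight balanced and each $-L_k$ is EEP. Let $Q\in\mathbb{R}^{(n-1)\times n}$ satisfy $QQ^\top=I_{n-1}$ and $Q\mathbf{1}=0$. If there exists a symmetric positive definite $P\in\mathbb{R}^{n\times n}$ such that \[ -QL_kPQ^\top-QPL_k^\top Q^\top\prec 0\quad\text{for all }k=1,\dots,m, \] then $\mathbb{L}=\{L_1,\dots,L_m\}$ is a consensus set for the switched system $\dot{\mathbf{x}}=-L_{\sigma(t)}\mathbf{x}$.
   Context: For a signed digraph with real weighted adjacency matrix $A$ (entries of any sign), the signed Laplacian is $L=\Sigma-A$, $\Sigma=\mathrm{diag}(\sigma_i)$, $\sigma_i=\sum_jA_{ij}$, so $L\mathbf{1}=0$; weight balanced means $L^\top\mathbf{1}=0$. $M$ is EEP if there is $t_0\ge0$ with $e^{Mt}$ entrywise positive for all real $t\ge t_0$. $X\prec0$ means $X$ is symmetric negative definite. A switching signal is a piecewise constant map $\sigma:[0,\infty)\to\{1,\dots,m\}$ with finitely many discontinuities on every bounded interval. $\mathbb{L}$ is a consensus set if for every switching signal and every $\mathbf{x}(0)$ there is $\alpha\in\mathbb{R}$ with $\lim_{t\to\infty}\mathbf{x}(t)=\alpha\mathbf{1}$. *)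

theory Defs
  imports "HOL-Analysis.Analysis"
begin

definition ones :: "real^'n" where
  "ones = (\<chi> i. 1)"

definition signed_laplacian :: "real^'n^'n \<Rightarrow> real^'n^'n" where
  "signed_laplacian A = (\<chi> i j. (if i = j then (\<Sum>l\<in>UNIV. A $ i $ l) else 0) - A $ i $ j)"

definition weight_balanced :: "real^'n^'n \<Rightarrow> bool" where
  "weight_balanced L \<longleftrightarrow> transpose L *v ones = 0"

fun mat_pow :: "real^'n^'n \<Rightarrow> nat \<Rightarrow> real^'n^'n" where
  "mat_pow M 0 = mat 1"
| "mat_pow M (Suc k) = M ** mat_pow M k"

definition mat_exp :: "real^'n^'n \<Rightarrow> real^'n^'n" where
  "mat_exp M = (\<Sum>k. (1 / fact k) *\<^sub>R mat_pow M k)"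

definition EEP :: "real^'n^'n \<Rightarrow> bool" where
  "EEP M \<longleftrightarrow> (\<exists>t0\<ge>0. \<forall>t\<ge>t0. \<forall>i j. mat_exp (t *\<^sub>R M) $ i $ j > 0)"

definition symmetric_mat :: "real^'n^'n \<Rightarrow> bool" where
  "symmetric_mat X \<longleftrightarrow> transpose X = X"

definition pos_def :: "real^'n^'n \<Rightarrow> bool" where
  "pos_def X \<longleftrightarrow> symmetric_mat X \<and> (\<forall>v. v \<noteq> 0 \<longrightarrow> v \<bullet> (X *v v) > 0)"

definition neg_def :: "real^'n^'n \<Rightarrow> bool" where
  "neg_def X \<longleftrightarrow> symmetric_mat X \<and> (\<forall>v. v \<noteq> 0 \<longrightarrow> v \<bullet> (X *v v) < 0)"

definition switching_signal :: "nat \<Rightarrow> (real \<Rightarrow> nat) \<Rightarrow> bool" where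
  "switching_signal m \<sigma> \<longleftrightarrow>
     (\<forall>t\<ge>0. \<sigma> t \<in> {1..m}) \<and>
     (\<forall>T. finite {t\<in>{0..T}. \<not> continuous (at t within {0..}) \<sigma>})"

definition switched_solution ::
  "(nat \<Rightarrow> real^'n^'n) \<Rightarrow> (real \<Rightarrow> nat) \<Rightarrow> (real \<Rightarrow> real^'n) \<Rightarrow> bool" where
  "switched_solution L \<sigma> x \<longleftrightarrow>
     continuous_on {0..} x \<and>
     (\<forall>t>0. continuous (at t) \<sigma> \<longrightarrow>
        (x has_vector_derivative (- (L (\<sigma> t) *v x t))) (at t))"

definition consensus_set :: "nat \<Rightarrow> (nat \<Rightarrow> real^'n^'n) \<Rightarrow> bool" where
  "consensus_set m L \<longleftrightarrow>
     (\<forall>\<sigma> x. switching_signal m \<sigma> \<and> switched_solution L \<sigma> x \<longrightarrow>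
        (\<exists>\<alpha>::real. (x \<longlongrightarrow> \<alpha> *\<^sub>R ones) at_top))"

end

theory Submission imports Defs begin

declare transpose_matrix_vector[simp del]

lemma inner_transpose_mv: "(transpose A *v (u::real^'m)) \<bullet> w = u \<bullet> ((A::real^'n^'m) *v w)"
  by (metis dot_lmul_matrix transpose_matrix_vector)

lemma ones_inner_ones: "ones \<bullet> (ones::real^'n) = real CARD('n)"
  by (simp add: ones_def inner_vec_def)

lemma ones_nz: "(ones::real^'n) \<noteq> 0"
  using ones_inner_ones[where 'n='n] by auto

lemma proj_decomp:
  fixes Q :: "real^'n^'q"
  assumes dimQ: "CARD('q)+1 = CARD('n)" and QQ: "Q ** transpose Q = mat 1" and Q1: "Q *v ones = 0"
  shows "v = transpose Q *v (Q *v v) + ((ones \<bullet> v) / real CARD('n)) *\<^sub>R ones"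
proof -
  let ?f = "\<lambda>u::real^'q. transpose Q *v u"
  define S where "S = range ?f"
  have lin: "linear ?f" by (rule matrix_vector_mul_linear)
  have QQu: "Q *v (transpose Q *v u) = u" for u
    by (simp add: matrix_vector_mul_assoc QQ)
  have inj: "inj_on ?f (span UNIV)"
    by (metis QQu inj_on_def)
  have dS: "dim S = CARD('q)"
    using dim_image_eq[OF lin inj] by (simp add: S_def)
  have subS: "subspace S" unfolding S_def
    using linear_subspace_image[OF lin subspace_UNIV] by simp
  have "ones \<notin> span S"
  proof
    assume "ones \<in> span S"
    then have "ones \<in> S" using subS by (metis span_eq_iff)
    then obtain u where u: "ones = ?f u" unfolding S_def by blast
    have "?f u \<bullet> ones = 0" using inner_transpose_mv[of Q u ones] Q1 by simp
    then have "ones \<bullet> (ones::real^'n) = 0" using [[show_types, show_sorts]] by (simp only: u[symmetric])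
    then show False using ones_inner_ones[where 'n='n] by simp
  qed
  then have "dim (insert ones S) = CARD('n)" using dS dimQ by (simp add: dim_insert)
  then have "span (insert ones S) = UNIV" using dim_eq_full[of "insert ones S"] by simp
  then have "v \<in> span (insert ones S)" by simp
  then obtain k where "v - k *\<^sub>R ones \<in> span S" by (auto simp: span_insert)
  then have "v - k *\<^sub>R ones \<in> S" using subS by (metis span_eq_iff)
  then obtain u where u: "v - k *\<^sub>R ones = ?f u" unfolding S_def by blast
  have Qv: "Q *v v = u"
  proof -
    have "Q *v (v - k *\<^sub>R ones) = u" using u QQu by simp
    then show ?thesis by (simp add: matrix_vector_mult_diff_distrib matrix_vector_mult_scaleR Q1)
  qed
  have v: "v = ?f (Q *v v) + k *\<^sub>R ones" using u Qv by (simp add: algebra_simps)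
  have "ones \<bullet> v = (Q *v v) \<bullet> (Q *v ones) + k * (ones \<bullet> (ones::real^'n))"
  proof -
    have "ones \<bullet> v = ones \<bullet> (?f (Q *v v) + k *\<^sub>R ones)" using v by metis
    also have "\<dots> = ?f (Q *v v) \<bullet> ones + k * (ones \<bullet> (ones::real^'n))"
      by (simp only: inner_add_right inner_scaleR_right inner_commute)
    finally show ?thesis by (simp only: inner_transpose_mv)
  qed
  then have "ones \<bullet> v = k * real CARD('n)" using Q1 ones_inner_ones[where 'n='n] by simp
  then have "k = (ones \<bullet> v) / real CARD('n)" by simp
  then show ?thesis using v by simp
qed

lemma qf_scale: "(a *\<^sub>R v) \<bullet> ((M::real^'n^'n) *v (a *\<^sub>R v)) = a^2 * (v \<bullet> (M *v v))"
  by (simp add: matrix_vector_mult_scaleR power2_eq_square)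

lemma qf_pos_bound:
  fixes M :: "real^'n^'n"
  assumes pd: "\<forall>v. v \<noteq> 0 \<longrightarrow> v \<bullet> (M *v v) > 0"
  shows "\<exists>c>0. \<forall>v. c * (norm v)^2 \<le> v \<bullet> (M *v v)"
proof -
  let ?f = "\<lambda>v. v \<bullet> (M *v v)"
  have cont: "continuous_on (sphere 0 1) ?f"
    by (intro continuous_intros bounded_linear.continuous_on[OF matrix_vector_mul_bounded_linear])
  have ne: "sphere (0::real^'n) 1 \<noteq> {}" by simp
  obtain u where u: "u \<in> sphere 0 1" "\<forall>v\<in>sphere 0 1. ?f u \<le> ?f v"
    using continuous_attains_inf[OF compact_sphere ne cont] by blast
  have "u \<noteq> 0" using u(1) by auto
  then have cpos: "?f u > 0" using pd by blast
  have "?f u * (norm v)^2 \<le> ?f v" for v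
  proof (cases "v = 0")
    case True then show ?thesis by simp
  next
    case False
    let ?v = "(1 / norm v) *\<^sub>R v"
    have "?v \<in> sphere 0 1" using False by (simp add: norm_scaleR)
    then have "?f u \<le> ?f ?v" using u(2) by blast
    also have "?f ?v = (1/norm v)^2 * ?f v" by (rule qf_scale)
    finally have "?f u * (norm v)^2 \<le> (1/norm v)^2 * ?f v * (norm v)^2"
      by (simp add: mult_right_mono)
    also have "\<dots> = ?f v" using False by (simp add: field_simps)
    finally show ?thesis .
  qed
  then show ?thesis using cpos by blast
qed

lemma neg_mv: "(- M) *v v = - ((M::real^'n^'m) *v v)"
  by (simp add: vec_eq_iff matrix_vector_mult_def sum_negf)

lemma qf_neg_bound:
  fixes M :: "real^'n^'n"
  assumes nd: "\<forall>v. v \<noteq> 0 \<longrightarrow> v \<bullet> (M *v v) < 0"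
  shows "\<exists>c>0. \<forall>v. v \<bullet> (M *v v) \<le> - c * (norm v)^2"
proof -
  have "\<forall>v. v \<noteq> 0 \<longrightarrow> v \<bullet> ((- M) *v v) > 0" using nd
    by (simp add: neg_mv) 
  from qf_pos_bound[OF this] obtain c where "c > 0" "\<forall>v. c * (norm v)^2 \<le> v \<bullet> ((- M) *v v)" by blast
  then show ?thesis by (intro exI[of _ c]) (auto simp: neg_mv, smt (verit))
qed

lemma mv_bound: "\<exists>K>0. \<forall>v. norm ((M::real^'n^'m) *v v) \<le> K * norm v"
  using bounded_linear.pos_bounded[OF matrix_vector_mul_bounded_linear[of M]]
  by (metis mult.commute)

lemma qf_upper: "\<exists>K>0. \<forall>v. v \<bullet> ((M::real^'n^'n) *v v) \<le> K * (norm v)^2"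
proof -
  obtain K where K: "K > 0" "\<forall>v. norm (M *v v) \<le> K * norm v" using mv_bound by blast
  have "v \<bullet> (M *v v) \<le> K * (norm v)^2" for v
  proof -
    have "v \<bullet> (M *v v) \<le> norm v * norm (M *v v)" by (rule norm_cauchy_schwarz)
    also have "\<dots> \<le> norm v * (K * norm v)" using K by (simp add: mult_left_mono)
    finally show ?thesis by (simp add: power2_eq_square algebra_simps)
  qed
  then show ?thesis using K by blast
qed

lemma lap_ones: "signed_laplacian A *v ones = (0::real^'n)"
proof -
  have "(signed_laplacian A *v ones) $ i = 0" for i
  proof -
    have "(signed_laplacian A *v ones) $ i = (\<Sum>j\<in>UNIV. (if i = j then (\<Sum>l\<in>UNIV. A$i$l) else 0) - A$i$j)"
      by (simp add: signed_laplacian_def matrix_vector_mult_def ones_def)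
    also have "\<dots> = (\<Sum>j\<in>UNIV. (if i = j then (\<Sum>l\<in>UNIV. A$i$l) else 0)) - (\<Sum>j\<in>UNIV. A$i$j)"
      by (rule sum_subtractf)
    also have "\<dots> = 0" by simp
    finally show ?thesis .
  qed
  then show ?thesis by (simp add: vec_eq_iff)
qed


lemma mono_ftc:
  fixes g g' :: "real \<Rightarrow> real"
  assumes sw: "switching_signal m \<sigma>" and cg: "continuous_on {0..} g"
    and der: "\<And>t. t > 0 \<Longrightarrow> continuous (at t) \<sigma> \<Longrightarrow> (g has_vector_derivative g' t) (at t)"
    and nonpos: "\<And>t. t \<ge> 0 \<Longrightarrow> g' t \<le> 0" and T: "T \<ge> 0"
  shows "g T \<le> g 0"
proof -
  define S where "S = {t\<in>{0..T}. \<not> continuous (at t within {0..}) \<sigma>}"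
  have fin: "finite S" using sw unfolding switching_signal_def S_def by blast
  have "(g' has_integral (g T - g 0)) {0..T}"
  proof (rule fundamental_theorem_of_calculus_interior_strong[OF fin T])
    fix t assume t: "t \<in> {0<..<T} - S"
    then have "continuous (at t within {0..}) \<sigma>" unfolding S_def by auto
    moreover have "at t within {0..} = at t"
      using t by (intro at_within_interior) auto
    ultimately have "continuous (at t) \<sigma>" by simp
    then show "(g has_vector_derivative g' t) (at t)" using der t by auto
  next
    show "continuous_on {0..T} g" using cg by (rule continuous_on_subset) auto
  qed
  then have "((\<lambda>t. - g' t) has_integral - (g T - g 0)) {0..T}" by (rule has_integral_neg)
  then have "0 \<le> - (g T - g 0)" by (rule has_integral_nonneg) (use nonpos in auto)
  then show ?thesis by simp
qed


theorem theorem9: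
  fixes m :: nat
    and A :: "nat \<Rightarrow> real^'n^'n"
    and Q :: "real^'n^'q"
    and P :: "real^'n^'n"
  assumes dimQ: "CARD('q) + 1 = CARD('n)"
    and bal: "\<forall>k\<in>{1..m}. weight_balanced (signed_laplacian (A k))"
    and eep: "\<forall>k\<in>{1..m}. EEP (- signed_laplacian (A k))"
    and QQ: "Q ** transpose Q = mat 1"
    and Q1: "Q *v ones = 0"
    and Ppd: "pos_def P"
    and lmi: "\<forall>k\<in>{1..m}. neg_def
               (- (Q ** signed_laplacian (A k) ** P ** transpose Q)
                - (Q ** P ** transpose (signed_laplacian (A k)) ** transpose Q))"
  shows "consensus_set m (\<lambda>k. signed_laplacian (A k))"
proof -
  define L where "L = (\<lambda>k. signed_laplacian (A k))"
  define X where "X = Q ** P ** transpose Q"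
  define G where "G = (\<lambda>k. Q ** L k ** P ** transpose Q)"
  define M where "M = (\<lambda>k. - G k - transpose (G k))"
  have Psym: "transpose P = P" using Ppd by (simp add: pos_def_def symmetric_mat_def)
  have QQv: "Q *v (transpose Q *v u) = u" for u
    by (simp add: matrix_vector_mul_assoc QQ)
  have iQ: "w \<bullet> (Q *v u) = (transpose Q *v w) \<bullet> u" for w u
    by (simp add: inner_transpose_mv)
  have Xv: "X *v w = Q *v (P *v (transpose Q *v w))" for w
    by (simp add: X_def matrix_vector_mul_assoc matrix_mul_assoc)
  have Xqf: "w \<bullet> (X *v w) = (transpose Q *v w) \<bullet> (P *v (transpose Q *v w))" for w
    by (simp add: Xv iQ)
  have Xpd: "\<forall>w. w \<noteq> 0 \<longrightarrow> w \<bullet> (X *v w) > 0"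
  proof (intro allI impI)
    fix w :: "real^'q" assume "w \<noteq> 0"
    then have "transpose Q *v w \<noteq> 0" using QQv[of w] by auto
    then show "w \<bullet> (X *v w) > 0" using Ppd Xqf unfolding pos_def_def by auto
  qed
  have Xsym: "transpose X = X"
    by (simp add: X_def matrix_transpose_mul Psym matrix_mul_assoc)
  have "\<forall>w. X *v w = 0 \<longrightarrow> w = 0" using Xpd by force
  then obtain B where BX: "B ** X = mat 1" using matrix_left_invertible_ker by blast
  then have XB: "X ** B = mat 1" using matrix_left_right_inverse by blast
  have Bsym: "transpose B = B"
  proof -
    have "transpose B ** X = mat 1"
      using XB by (metis Xsym matrix_transpose_mul transpose_mat)
    then have "transpose B = (transpose B ** X) ** B"
      by (metis XB matrix_mul_assoc matrix_mul_rid)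
    then show ?thesis using \<open>transpose B ** X = mat 1\<close> by (simp add: matrix_mul_lid)
  qed
  have iB: "u \<bullet> (B *v v) = (B *v u) \<bullet> v" for u v
    using inner_transpose_mv[of B u v] Bsym by simp
  have LQ: "L k *v (transpose Q *v (Q *v v)) = L k *v v" for k v
  proof -
    have "L k *v v = L k *v (transpose Q *v (Q *v v) + ((ones \<bullet> v) / real CARD('n)) *\<^sub>R ones)"
      using proj_decomp[OF dimQ QQ Q1, of v] by metis
    also have "\<dots> = L k *v (transpose Q *v (Q *v v))"
      by (simp add: matrix_vector_right_distrib matrix_vector_mult_scaleR L_def lap_ones)
    finally show ?thesis by simp
  qed
  define W where "W = (\<lambda>z. B *v (Q *v z))"
  have zX: "Q *v z = X *v W z" for z
    by (simp add: W_def matrix_vector_mul_assoc matrix_mul_assoc XB)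
  have Gv: "G k *v w = Q *v (L k *v (P *v (transpose Q *v w)))" for k w
    by (simp add: G_def matrix_vector_mul_assoc matrix_mul_assoc)
  have QLz: "Q *v (L k *v z) = G k *v W z" for k z
  proof -
    have "Q *v (L k *v z) = Q *v (L k *v (transpose Q *v (Q *v z)))" by (simp add: LQ)
    also have "\<dots> = Q *v (L k *v (transpose Q *v (Q *v (P *v (transpose Q *v W z)))))"
      by (subst zX, subst Xv, rule refl)
    also have "\<dots> = G k *v W z" by (simp add: LQ Gv)
    finally show ?thesis .
  qed
  define S where "S = transpose Q ** B ** Q"
  have iQt: "u \<bullet> (transpose Q *v y) = (Q *v u) \<bullet> y" for u y
    using inner_transpose_mv[of "transpose Q" u y] by simp
  have Sv: "u \<bullet> (S *v v) = W u \<bullet> (Q *v v)" for u v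
  proof -
    have "S *v v = transpose Q *v (B *v (Q *v v))"
      by (simp add: S_def matrix_vector_mul_assoc matrix_mul_assoc)
    then have "u \<bullet> (S *v v) = (Q *v u) \<bullet> (B *v (Q *v v))" by (simp add: iQt)
    also have "\<dots> = W u \<bullet> (Q *v v)" unfolding W_def by (rule iB)
    finally show ?thesis .
  qed
  have Ssym: "u \<bullet> (S *v v) = v \<bullet> (S *v u)" for u v
    unfolding Sv W_def by (metis iB inner_commute)
  have Mqf: "w \<bullet> (M k *v w) = - 2 * (w \<bullet> (G k *v w))" for k w
  proof -
    have "w \<bullet> (transpose (G k) *v w) = w \<bullet> (G k *v w)"
      by (simp add: inner_transpose_mv[of "G k" w w, symmetric] inner_commute)
    then show ?thesis
      by (simp add: M_def matrix_vector_mult_diff_rdistrib neg_mv inner_diff_right)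
  qed
  have mvneg: "Q *v (- v) = - (Q *v v)" for v
    by (simp add: vec_eq_iff matrix_vector_mult_def sum_negf)
  have derf: "z \<bullet> (S *v (- (L k *v z))) + (- (L k *v z)) \<bullet> (S *v z) = W z \<bullet> (M k *v W z)" for k z
  proof -
    have "z \<bullet> (S *v (- (L k *v z))) + (- (L k *v z)) \<bullet> (S *v z) = 2 * (z \<bullet> (S *v (- (L k *v z))))"
      using Ssym[of "- (L k *v z)" z] by simp
    also have "\<dots> = 2 * (W z \<bullet> (Q *v (- (L k *v z))))" by (simp only: Sv)
    also have "\<dots> = - 2 * (W z \<bullet> (G k *v W z))" by (simp add: mvneg QLz)
    also have "\<dots> = W z \<bullet> (M k *v W z)" by (simp add: Mqf)
    finally show ?thesis .
  qed
  have fW: "z \<bullet> (S *v z) = W z \<bullet> (X *v W z)" for z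
    by (subst Sv, subst zX, rule refl)
  have Gt: "transpose (G k) = Q ** P ** transpose (L k) ** transpose Q" for k
    by (simp add: G_def matrix_transpose_mul Psym matrix_mul_assoc)
  have Mneg: "\<forall>k\<in>{1..m}. \<exists>c>0. \<forall>v. v \<bullet> (M k *v v) \<le> - c * (norm v)^2"
  proof
    fix k assume "k \<in> {1..m}"
    then have "neg_def (M k)" using lmi by (simp add: M_def Gt) (simp add: G_def L_def)
    then show "\<exists>c>0. \<forall>v. v \<bullet> (M k *v v) \<le> - c * (norm v)^2"
      unfolding neg_def_def by (intro qf_neg_bound) blast
  qed
  then obtain cf where cf: "\<forall>k\<in>{1..m}. cf k > 0 \<and> (\<forall>v. v \<bullet> (M k *v v) \<le> - cf k * (norm v)^2)"
    by metis
  obtain KX where KX: "KX > 0" "\<forall>w. w \<bullet> (X *v w) \<le> KX * (norm w)^2" using qf_upper by blast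
  obtain d where d: "d > 0" "\<forall>w. d * (norm w)^2 \<le> w \<bullet> (X *v w)" using qf_pos_bound[OF Xpd] by blast
  obtain KM where KM: "KM > 0" "\<forall>w. norm (X *v w) \<le> KM * norm w" using mv_bound by blast
  define F where "F = (\<lambda>z. z \<bullet> (S *v z))"
  have ybound: "(norm (Q *v z))^2 \<le> (KM^2 / d) * F z" for z
  proof -
    have "norm (Q *v z) \<le> KM * norm (W z)" using zX[of z] KM by simp
    then have "(norm (Q *v z))^2 \<le> (KM * norm (W z))^2" by (simp add: power_mono)
    also have "\<dots> = KM^2 * (norm (W z))^2" by (simp add: power_mult_distrib)
    also have "\<dots> \<le> KM^2 * (F z / d)"
    proof (rule mult_left_mono)
      have "d * (norm (W z))^2 \<le> F z" using d(2) fW by (simp add: F_def)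
      then show "(norm (W z))^2 \<le> F z / d" using d(1) by (simp add: field_simps)
    qed simp
    finally show ?thesis by simp
  qed
  show ?thesis unfolding consensus_set_def
  proof (intro allI impI)
    fix \<sigma> and x :: "real \<Rightarrow> real^'n"
    assume H: "switching_signal m \<sigma> \<and> switched_solution (\<lambda>k. signed_laplacian (A k)) \<sigma> x"
    then have sw: "switching_signal m \<sigma>" and cx: "continuous_on {0..} x"
      and dx: "\<And>t. t > 0 \<Longrightarrow> continuous (at t) \<sigma> \<Longrightarrow> (x has_vector_derivative - (L (\<sigma> t) *v x t)) (at t)"
      unfolding switched_solution_def L_def by auto
    have sig: "\<sigma> t \<in> {1..m}" if "t \<ge> 0" for t using sw that unfolding switching_signal_def by auto
    have m1: "m \<ge> 1" using sig[of 0] by simp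
    define c where "c = Min (cf ` {1..m})"
    have cpos: "c > 0" unfolding c_def using m1 cf by (subst Min_gr_iff) auto
    have cle: "c \<le> cf k" if "k \<in> {1..m}" for k unfolding c_def using that by simp
    define \<beta> where "\<beta> = c / KX"
    have \<beta>pos: "\<beta> > 0" using cpos KX by (simp add: \<beta>_def)
    define D where "D = (\<lambda>t. exp (\<beta> * t) * (\<beta> * F (x t) + (x t \<bullet> (S *v (- (L (\<sigma> t) *v x t))) + (- (L (\<sigma> t) *v x t)) \<bullet> (S *v x t))))"
    have Dle: "D t \<le> 0" if "t \<ge> 0" for t
    proof -
      define k where "k = \<sigma> t"
      have k: "k \<in> {1..m}" using sig[OF that] by (simp add: k_def)
      define w where "w = W (x t)"
      have "\<beta> * F (x t) \<le> \<beta> * (KX * (norm w)^2)"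
        using KX(2) fW \<beta>pos by (simp add: F_def w_def)
      also have "\<dots> = c * (norm w)^2" using KX(1) by (simp add: \<beta>_def)
      finally have 1: "\<beta> * F (x t) \<le> c * (norm w)^2" .
      have "x t \<bullet> (S *v (- (L k *v x t))) + (- (L k *v x t)) \<bullet> (S *v x t) = w \<bullet> (M k *v w)"
        unfolding w_def by (rule derf)
      also have "\<dots> \<le> - cf k * (norm w)^2" using cf k by blast
      also have "\<dots> \<le> - c * (norm w)^2" using cle[OF k] by (simp add: mult_right_mono)
      finally have 2: "x t \<bullet> (S *v (- (L k *v x t))) + (- (L k *v x t)) \<bullet> (S *v x t) \<le> - c * (norm w)^2" .
      have "\<beta> * F (x t) + (x t \<bullet> (S *v (- (L k *v x t))) + (- (L k *v x t)) \<bullet> (S *v x t)) \<le> 0"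
        using 1 2 by linarith
      then show ?thesis unfolding D_def k_def[symmetric] by (simp add: mult_nonneg_nonpos)
    qed
    have gder: "((\<lambda>t. exp (\<beta> * t) * F (x t)) has_vector_derivative D t) (at t)"
      if "t > 0" "continuous (at t) \<sigma>" for t
    proof -
      let ?x' = "- (L (\<sigma> t) *v x t)"
      have hx: "(x has_vector_derivative ?x') (at t)" using dx that by blast
      have hS: "((\<lambda>t. S *v x t) has_vector_derivative S *v ?x') (at t)"
        by (rule bounded_linear.has_vector_derivative[OF matrix_vector_mul_bounded_linear hx])
      have hF: "((\<lambda>t. x t \<bullet> (S *v x t)) has_vector_derivative (x t \<bullet> (S *v ?x') + ?x' \<bullet> (S *v x t))) (at t)"
        by (rule bounded_bilinear.has_vector_derivative[OF bounded_bilinear_inner hx hS])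
      then have hF': "((\<lambda>t. F (x t)) has_real_derivative (x t \<bullet> (S *v ?x') + ?x' \<bullet> (S *v x t))) (at t)"
        by (simp add: has_real_derivative_iff_has_vector_derivative F_def)
      have he: "((\<lambda>t. exp (\<beta> * t)) has_real_derivative exp (\<beta> * t) * \<beta>) (at t)"
        by (auto intro!: derivative_eq_intros)
      have "((\<lambda>t. exp (\<beta> * t) * F (x t)) has_real_derivative
          exp (\<beta> * t) * \<beta> * F (x t) + (x t \<bullet> (S *v ?x') + ?x' \<bullet> (S *v x t)) * exp (\<beta> * t)) (at t)"
        by (rule DERIV_mult[OF he hF'])
      moreover have "exp (\<beta> * t) * \<beta> * F (x t) + (x t \<bullet> (S *v ?x') + ?x' \<bullet> (S *v x t)) * exp (\<beta> * t) = D t"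
        by (simp add: D_def algebra_simps)
      ultimately show ?thesis by (simp add: has_real_derivative_iff_has_vector_derivative)
    qed
    have cSx: "continuous_on {0..} (\<lambda>t. S *v x t)"
      by (rule bounded_linear.continuous_on[OF matrix_vector_mul_bounded_linear cx])
    have gcont: "continuous_on {0..} (\<lambda>t. exp (\<beta> * t) * F (x t))"
      unfolding F_def by (intro continuous_intros cx cSx)
    have decay: "F (x t) \<le> exp (- (\<beta> * t)) * F (x 0)" if "t \<ge> 0" for t
    proof -
      have "exp (\<beta> * t) * F (x t) \<le> exp (\<beta> * 0) * F (x 0)"
        by (rule mono_ftc[OF sw gcont gder Dle that]) auto
      then have "exp (- (\<beta> * t)) * (exp (\<beta> * t) * F (x t)) \<le> exp (- (\<beta> * t)) * F (x 0)"
        by (simp add: mult_left_mono)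
      then show ?thesis by (simp add: mult.assoc[symmetric] exp_add[symmetric])
    qed
    have lim0: "((\<lambda>t. (KM^2 / d) * (exp (- (\<beta> * t)) * F (x 0))) \<longlongrightarrow> 0) at_top"
    proof -
      have "filterlim (\<lambda>t. \<beta> * t) at_top at_top"
        by (rule filterlim_tendsto_pos_mult_at_top[OF tendsto_const \<beta>pos filterlim_ident])
      then have "filterlim (\<lambda>t. - (\<beta> * t)) at_bot at_top"
        by (simp add: filterlim_uminus_at_bot)
      then have "((\<lambda>t. exp (- (\<beta> * t))) \<longlongrightarrow> 0) at_top"
        by (rule filterlim_compose[OF exp_at_bot])
      then have "((\<lambda>t. exp (- (\<beta> * t)) * F (x 0)) \<longlongrightarrow> 0) at_top"
        by (rule tendsto_mult_left_zero)
      then show ?thesis by (rule tendsto_mult_right_zero)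
    qed
    have "((\<lambda>t. (norm (Q *v x t))^2) \<longlongrightarrow> 0) at_top"
    proof (rule tendsto_sandwich[OF _ _ tendsto_const lim0])
      show "\<forall>\<^sub>F t in at_top. 0 \<le> (norm (Q *v x t))^2" by simp
      show "\<forall>\<^sub>F t in at_top. (norm (Q *v x t))^2 \<le> (KM^2 / d) * (exp (- (\<beta> * t)) * F (x 0))"
        using eventually_ge_at_top[of "0::real"]
      proof (rule eventually_mono)
        fix t :: real assume t: "0 \<le> t"
        have "(norm (Q *v x t))^2 \<le> (KM^2 / d) * F (x t)" by (rule ybound)
        also have "\<dots> \<le> (KM^2 / d) * (exp (- (\<beta> * t)) * F (x 0))"
          using decay[OF t] d(1) by (intro mult_left_mono) auto
        finally show "(norm (Q *v x t))^2 \<le> (KM^2 / d) * (exp (- (\<beta> * t)) * F (x 0))" .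
      qed
    qed
    then have "((\<lambda>t. sqrt ((norm (Q *v x t))^2)) \<longlongrightarrow> sqrt 0) at_top" by (rule tendsto_real_sqrt)
    then have "((\<lambda>t. norm (Q *v x t)) \<longlongrightarrow> 0) at_top" by simp
    then have ylim: "((\<lambda>t. Q *v x t) \<longlongrightarrow> 0) at_top" by (simp add: tendsto_norm_zero_iff)
    have hder: "((\<lambda>t. ones \<bullet> x t) has_vector_derivative 0) (at t)"
      if "t > 0" "continuous (at t) \<sigma>" for t
    proof -
      have hx: "(x has_vector_derivative - (L (\<sigma> t) *v x t)) (at t)" using dx that by blast
      have 1: "((\<lambda>t. ones \<bullet> x t) has_vector_derivative ones \<bullet> (- (L (\<sigma> t) *v x t))) (at t)"
        by (rule bounded_linear.has_vector_derivative[OF bounded_linear_inner_right hx])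
      have "transpose (L (\<sigma> t)) *v ones = 0"
        using bal sig[of t] that unfolding weight_balanced_def L_def by auto
      then have "ones \<bullet> (L (\<sigma> t) *v x t) = 0"
        using inner_transpose_mv[of "L (\<sigma> t)" ones "x t"] by simp
      then show ?thesis using 1 by simp
    qed
    have hcont: "continuous_on {0..} (\<lambda>t. ones \<bullet> x t)" by (intro continuous_intros cx)
    have avg: "ones \<bullet> x t = ones \<bullet> x 0" if "t \<ge> 0" for t
    proof -
      have "ones \<bullet> x t \<le> ones \<bullet> x 0"
        by (rule mono_ftc[OF sw hcont hder _ that]) auto
      moreover have "- (ones \<bullet> x t) \<le> - (ones \<bullet> x 0)"
      proof (rule mono_ftc[where g="\<lambda>t. - (ones \<bullet> x t)" and g'="\<lambda>_. 0", OF sw _ _ _ that])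
        show "continuous_on {0..} (\<lambda>t. - (ones \<bullet> x t))" by (intro continuous_intros hcont)
        fix s :: real assume "s > 0" "continuous (at s) \<sigma>"
        then show "((\<lambda>t. - (ones \<bullet> x t)) has_vector_derivative 0) (at s)"
          using has_vector_derivative_minus[OF hder] by fastforce
      qed auto
      ultimately show ?thesis by simp
    qed
    define a where "a = (ones \<bullet> x 0) / real CARD('n)"
    have ev: "\<forall>\<^sub>F t in at_top. transpose Q *v (Q *v x t) + a *\<^sub>R ones = x t"
      using eventually_ge_at_top[of "0::real"]
    proof (rule eventually_mono)
      fix t :: real assume "0 \<le> t"
      then have av: "ones \<bullet> x t = ones \<bullet> x 0" by (rule avg)
      have e: "x t = transpose Q *v (Q *v x t) + ((ones \<bullet> x t) / real CARD('n)) *\<^sub>R ones"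
        by (rule proj_decomp[OF dimQ QQ Q1])
      show "transpose Q *v (Q *v x t) + a *\<^sub>R ones = x t"
        unfolding a_def av[symmetric] using e[symmetric] by (simp only:)
    qed
    have "((\<lambda>t. transpose Q *v (Q *v x t) + a *\<^sub>R ones) \<longlongrightarrow> transpose Q *v 0 + a *\<^sub>R ones) at_top"
      by (intro tendsto_add tendsto_const bounded_linear.tendsto[OF matrix_vector_mul_bounded_linear ylim])
    then have "((\<lambda>t. transpose Q *v (Q *v x t) + a *\<^sub>R ones) \<longlongrightarrow> a *\<^sub>R ones) at_top" by simp
    then have "(x \<longlongrightarrow> a *\<^sub>R ones) at_top" by (rule Lim_transform_eventually[OF _ ev])
    then show "\<exists>\<alpha>. (x \<longlongrightarrow> \<alpha> *\<^sub>R ones) at_top" by blast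
  qed
qed

end
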